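(* Every matroid of finite rank is unionable: if $F$ is a matroid of finite rank and $N$ is any matroid, then $F\vee N$ is a matroid.
   Context: Matroids (possibly infinite) $(E,\mathcal{L})$: $\emptyset\in\mathcal{L}$; subsets of independent sets are independent; if $B$ is maximal in $\mathcal{L}$ and $A\in\mathcal{L}$ is not maximal, then $A\cup\{b\}\in\mathcal{L}$ for some $b\in B\setminus A$; for $A\in\mathcal{L}$ and $A\subseteq X\subseteq E$, $\{S\in\mathcal{L}:A\subseteq S\subseteq X\}$ has a maximal element. The rank is the cardinality of a base (maximal independent set). The union $F\vee N$ has ground set $E(F)\cup E(N)$ and independent sets $\{S\cup T: S\in\mathcal{L}(F),\ T\in\mathcal{L}(N)\}$. A matroid $F$ is unionable if $F\vee N$ is a matroid for every matroid $N$. *)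

theory Defs
  imports Main
begin

definition is_base :: "'a set set \<Rightarrow> 'a set \<Rightarrow> bool" where
  "is_base L B \<longleftrightarrow> B \<in> L \<and> (\<forall>S\<in>L. B \<subseteq> S \<longrightarrow> S = B)"

definition matroid :: "'a set \<Rightarrow> 'a set set \<Rightarrow> bool" where
  "matroid E L \<longleftrightarrow>
     (\<forall>S\<in>L. S \<subseteq> E) \<and>
     {} \<in> L \<and>
     (\<forall>A B. B \<in> L \<longrightarrow> A \<subseteq> B \<longrightarrow> A \<in> L) \<and>
     (\<forall>A B. is_base L B \<longrightarrow> A \<in> L \<longrightarrow> \<not> is_base L A \<longrightarrow>
        (\<exists>b\<in>B - A. insert b A \<in> L)) \<and>
     (\<forall>A X. A \<in> L \<longrightarrow> A \<subseteq> X \<longrightarrow> X \<subseteq> E \<longrightarrow>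
        (\<exists>M. M \<in> L \<and> A \<subseteq> M \<and> M \<subseteq> X \<and>
              (\<forall>S\<in>L. M \<subseteq> S \<longrightarrow> S \<subseteq> X \<longrightarrow> S = M)))"

text \<open>Finite rank: the (common) cardinality of a base is finite, i.e. some base is finite.\<close>
definition finite_rank :: "'a set set \<Rightarrow> bool" where
  "finite_rank L \<longleftrightarrow> (\<exists>B. is_base L B \<and> finite B)"

definition union_indep :: "'a set set \<Rightarrow> 'a set set \<Rightarrow> 'a set set" where
  "union_indep L1 L2 = {S \<union> T | S T. S \<in> L1 \<and> T \<in> L2}"

end

theory Submission
  imports Defs
begin

definition maxin :: "'a set set \<Rightarrow> 'a set \<Rightarrow> 'a set \<Rightarrow> bool" where
  "maxin L X M \<longleftrightarrow> M \<in> L \<and> M \<subseteq> X \<and> (\<forall>S\<in>L. M \<subseteq> S \<longrightarrow> S \<subseteq> X \<longrightarrow> S = M)"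

lemma m_sub: "matroid E L \<Longrightarrow> S \<in> L \<Longrightarrow> S \<subseteq> E"
  unfolding matroid_def by (elim conjE) (erule bspec)
lemma m_empty: "matroid E L \<Longrightarrow> {} \<in> L"
  unfolding matroid_def by (elim conjE)
lemma m_down: "matroid E L \<Longrightarrow> B \<in> L \<Longrightarrow> A \<subseteq> B \<Longrightarrow> A \<in> L"
  unfolding matroid_def by (elim conjE) blast
lemma m_aug: "matroid E L \<Longrightarrow> is_base L B \<Longrightarrow> A \<in> L \<Longrightarrow> \<not> is_base L A \<Longrightarrow> \<exists>b\<in>B - A. insert b A \<in> L"
  unfolding matroid_def by (elim conjE) (drule spec, drule spec, drule mp, assumption, drule mp, assumption, erule mp, assumption)
lemma m_max: assumes m: "matroid E L" and a: "A \<in> L" "A \<subseteq> X" "X \<subseteq> E"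
  shows "\<exists>M. maxin L X M \<and> A \<subseteq> M"
proof -
  have h: "\<forall>A X. A \<in> L \<longrightarrow> A \<subseteq> X \<longrightarrow> X \<subseteq> E \<longrightarrow>
        (\<exists>M. M \<in> L \<and> A \<subseteq> M \<and> M \<subseteq> X \<and>
              (\<forall>S\<in>L. M \<subseteq> S \<longrightarrow> S \<subseteq> X \<longrightarrow> S = M))"
    using m unfolding matroid_def by (elim conjE)
  have "\<exists>M. M \<in> L \<and> A \<subseteq> M \<and> M \<subseteq> X \<and> (\<forall>S\<in>L. M \<subseteq> S \<longrightarrow> S \<subseteq> X \<longrightarrow> S = M)"
    using h[rule_format, OF a] .
  then obtain M where M: "M \<in> L" "A \<subseteq> M" "M \<subseteq> X" "\<forall>S\<in>L. M \<subseteq> S \<longrightarrow> S \<subseteq> X \<longrightarrow> S = M"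
    by (elim exE conjE)
  have "maxin L X M" unfolding maxin_def using M(1,3,4) by (intro conjI)
  then show ?thesis using M(2) by (intro exI[of _ M] conjI)
qed

lemma maxinD: "maxin L X M \<Longrightarrow> S \<in> L \<Longrightarrow> M \<subseteq> S \<Longrightarrow> S \<subseteq> X \<Longrightarrow> S = M"
  unfolding maxin_def by blast
lemma baseD: "is_base L B \<Longrightarrow> S \<in> L \<Longrightarrow> B \<subseteq> S \<Longrightarrow> S = B"
  unfolding is_base_def by blast
lemma baseL: "is_base L B \<Longrightarrow> B \<in> L"
  unfolding is_base_def by blast

lemma base_exists: assumes "matroid E L" shows "\<exists>B. is_base L B"
proof -
  obtain M where M: "maxin L E M" using m_max[OF assms m_empty[OF assms]] by blast
  have "is_base L M" unfolding is_base_def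
    using M maxinD[OF M] m_sub[OF assms] unfolding maxin_def by blast
  then show ?thesis by blast
qed

lemma base_proper: "is_base L B \<Longrightarrow> A \<subseteq> B \<Longrightarrow> A \<noteq> B \<Longrightarrow> \<not> is_base L A"
  unfolding is_base_def by blast

lemma L_ext: assumes m: "matroid E L" and I: "I \<in> L" and B: "is_base L B"
  shows "\<exists>B'. is_base L B' \<and> I \<subseteq> B' \<and> B' \<subseteq> I \<union> B"
proof -
  have "I \<union> B \<subseteq> E" using m_sub[OF m I] m_sub[OF m baseL[OF B]] by blast
  then obtain M where M: "maxin L (I \<union> B) M" "I \<subseteq> M" using m_max[OF m I] by blast
  have Mp: "M \<in> L" "M \<subseteq> I \<union> B" using M(1) unfolding maxin_def by auto
  have "is_base L M"
  proof (rule ccontr)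
    assume "\<not> is_base L M"
    then obtain b where b: "b \<in> B - M" "insert b M \<in> L" using m_aug[OF m B Mp(1)] by blast
    have "insert b M = M" using maxinD[OF M(1) b(2)] b(1) Mp(2) by blast
    then show False using b(1) by blast
  qed
  then show ?thesis using M(2) Mp(2) by (intro exI[of _ M]) simp
qed

lemma L1: assumes m: "matroid E L" and B1: "is_base L B1" and B2: "is_base L B2"
  and x: "B1 - B2 = {x}" shows "\<exists>y. B2 - B1 = {y}"
proof -
  have "B2 - B1 \<noteq> {}"
  proof
    assume "B2 - B1 = {}"
    then have "B2 \<subseteq> B1" by blast
    then have "B1 = B2" using baseD[OF B2 baseL[OF B1]] by blast
    then show False using x by blast
  qed
  then obtain c where c: "c \<in> B2" "c \<notin> B1" by blast
  have "B2 - B1 \<subseteq> {c}"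
  proof
    fix y assume y: "y \<in> B2 - B1"
    show "y \<in> {c}"
    proof (rule ccontr)
      assume yc: "y \<notin> {c}"
      have A: "B2 - {c} \<in> L" using m_down[OF m baseL[OF B2]] by blast
      have nb: "\<not> is_base L (B2 - {c})" using base_proper[OF B2] c by blast
      obtain b where b: "b \<in> B1" "b \<notin> B2 - {c}" "insert b (B2 - {c}) \<in> L"
        using m_aug[OF m B1 A nb] by blast
      have "b \<notin> B2" using b c by blast
      then have "b = x" using b(1) x by blast
      have "B1 \<subseteq> insert b (B2 - {c})" using \<open>b = x\<close> x c(2) by blast
      then have "insert b (B2 - {c}) = B1" using baseD[OF B1 b(3)] by blast
      then show False using y yc by blast
    qed
  qed
  then have "B2 - B1 = {c}" using c by blast
  then show ?thesis by (rule exI)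
qed

lemma GL_aux: assumes m: "matroid E L" and B2: "is_base L B2"
  shows "is_base L B1 \<Longrightarrow> card (B1 - B2) = n \<Longrightarrow> finite (B1 - B2) \<Longrightarrow>
     finite (B2 - B1) \<and> card (B2 - B1) \<le> n"
proof (induction n arbitrary: B1)
  case 0
  then have "B1 \<subseteq> B2" by auto
  then have "B1 = B2" using baseD[OF 0(1) baseL[OF B2]] by blast
  then show ?case by simp
next
  case (Suc n)
  then have "B1 - B2 \<noteq> {}" by (metis card.empty nat.distinct(1))
  then obtain x where x: "x \<in> B1 - B2" by blast
  have A: "B1 - {x} \<in> L" using m_down[OF m baseL[OF Suc.prems(1)]] by blast
  have nb: "\<not> is_base L (B1 - {x})" using base_proper[OF Suc.prems(1)] x by blast
  obtain y where y: "y \<in> B2 - (B1 - {x})" "insert y (B1 - {x}) \<in> L" using m_aug[OF m B2 A nb] by blast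
  have yx: "y \<noteq> x" "y \<notin> B1" "y \<in> B2" using x y by auto
  obtain B3 where B3: "is_base L B3" "insert y (B1 - {x}) \<subseteq> B3" "B3 \<subseteq> insert y (B1 - {x}) \<union> B2"
    using L_ext[OF m y(2) B2] by blast
  have "x \<notin> B3" using B3(3) x yx(1) by auto
  then have "B1 - B3 = {x}" using B3(2) x by auto
  then obtain w where w: "B3 - B1 = {w}" using L1[OF m Suc.prems(1) B3(1)] by blast
  have "y \<in> B3 - B1" using B3(2) yx(2) by auto
  then have "w = y" using w by auto
  have B3eq: "B3 = insert y (B1 - {x})"
  proof
    show "B3 \<subseteq> insert y (B1 - {x})" using w \<open>w = y\<close> \<open>x \<notin> B3\<close> by auto
  qed (rule B3(2))
  have "B3 - B2 = (B1 - B2) - {x}" using B3eq yx(3) by auto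
  then have "card (B3 - B2) = n" "finite (B3 - B2)" using Suc.prems x by auto
  then have IH: "finite (B2 - B3) \<and> card (B2 - B3) \<le> n" using Suc.IH[OF B3(1)] by blast
  have sub: "B2 - B1 \<subseteq> insert y (B2 - B3)" using B3eq x by auto
  have "finite (B2 - B1)" using IH sub finite_subset by auto
  moreover have "card (B2 - B1) \<le> Suc n"
  proof -
    have "card (B2 - B1) \<le> card (insert y (B2 - B3))" using IH sub by (intro card_mono) auto
    also have "\<dots> \<le> Suc (card (B2 - B3))" using IH by (simp add: card_insert_if)
    finally show ?thesis using IH by linarith
  qed
  ultimately show ?case by blast
qed

lemma GL: assumes "matroid E L" "is_base L B1" "is_base L B2" "finite (B1 - B2)"
  shows "finite (B2 - B1) \<and> card (B2 - B1) \<le> card (B1 - B2)"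
  using GL_aux[OF assms(1) assms(3) assms(2) refl assms(4)] .


lemma RL: assumes m: "matroid E L" and B: "maxin L X B" and B': "maxin L X B'" and f: "finite (B - B')"
  shows "finite (B' - B) \<and> card (B' - B) \<le> card (B - B')"
proof -
  obtain B0 where B0: "is_base L B0" using base_exists[OF m] by blast
  have B'L: "B' \<in> L" "B' \<subseteq> X" using B' unfolding maxin_def by auto
  have BL: "B \<in> L" "B \<subseteq> X" using B unfolding maxin_def by auto
  obtain C' where C': "is_base L C'" "B' \<subseteq> C'" using L_ext[OF m B'L(1) B0] by blast
  obtain C where C: "is_base L C" "B \<subseteq> C" "C \<subseteq> B \<union> C'" using L_ext[OF m BL(1) C'(1)] by blast
  have "C \<inter> X \<in> L" using m_down[OF m baseL[OF C(1)], of "C \<inter> X"] by simp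
  then have CX: "C \<inter> X = B" using maxinD[OF B, of "C \<inter> X"] C(2) BL(2) by auto
  have sub1: "C - C' \<subseteq> B - B'" using C(3) C'(2) by auto
  then have "finite (C - C')" using f finite_subset by auto
  then have g: "finite (C' - C) \<and> card (C' - C) \<le> card (C - C')" using GL[OF m C(1) C'(1)] by simp
  have sub2: "B' - B \<subseteq> C' - C" using CX C'(2) B'L(2) by auto
  have "finite (B' - B)" using g sub2 finite_subset by auto
  moreover have "card (B' - B) \<le> card (C' - C)" using g sub2 by (intro card_mono) auto
  moreover have "card (C - C') \<le> card (B - B')" using f sub1 by (intro card_mono) auto
  ultimately show ?thesis using g by linarith
qed

lemma rank_bound: assumes m: "matroid E L" and B0: "is_base L B0" "finite B0" and S: "S \<in> L"
  shows "finite S \<and> card S \<le> card B0"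
proof -
  obtain B where B: "is_base L B" "S \<subseteq> B" using L_ext[OF m S B0(1)] by blast
  have "finite (B0 - B)" using B0(2) by simp
  then have g: "finite (B - B0) \<and> card (B - B0) \<le> card (B0 - B)" using GL[OF m B0(1) B(1)] by simp
  have "B \<subseteq> (B - B0) \<union> B0" by auto
  then have fB: "finite B" using g B0(2) finite_subset by auto
  have c1: "card B = card (B \<inter> B0) + card (B - B0)" using card_Int_Diff[OF fB] .
  have c2: "card B0 = card (B \<inter> B0) + card (B0 - B)" using card_Int_Diff[OF B0(2), of B] by (simp add: Int_commute)
  have "card B \<le> card B0" using c1 c2 g by linarith
  moreover have "card S \<le> card B" using fB B(2) by (intro card_mono) auto
  moreover have "finite S" using fB B(2) finite_subset by auto
  ultimately show ?thesis by linarith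
qed

lemma F_aug: assumes m: "matroid E L" and bnd: "\<forall>S\<in>L. finite S" and P: "P \<in> L" and Q: "Q \<in> L"
  and c: "card P < card Q" shows "\<exists>q\<in>Q - P. insert q P \<in> L"
proof -
  have X: "P \<union> Q \<subseteq> E" using m_sub[OF m P] m_sub[OF m Q] by auto
  obtain P' where P': "maxin L (P \<union> Q) P'" "P \<subseteq> P'" using m_max[OF m P _ X] by auto
  obtain Q' where Q': "maxin L (P \<union> Q) Q'" "Q \<subseteq> Q'" using m_max[OF m Q _ X] by auto
  have PL: "P' \<in> L" "P' \<subseteq> P \<union> Q" using P'(1) unfolding maxin_def by auto
  have QL: "Q' \<in> L" "Q' \<subseteq> P \<union> Q" using Q'(1) unfolding maxin_def by auto
  have fP: "finite P'" using bnd PL(1) by blast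
  have fQ: "finite Q'" using bnd QL(1) by blast
  have r1: "card (P' - Q') \<le> card (Q' - P')" using RL[OF m Q'(1) P'(1)] fQ by auto
  have r2: "card (Q' - P') \<le> card (P' - Q')" using RL[OF m P'(1) Q'(1)] fP by auto
  have c1: "card P' = card (P' \<inter> Q') + card (P' - Q')" using card_Int_Diff[OF fP] .
  have c2: "card Q' = card (P' \<inter> Q') + card (Q' - P')" using card_Int_Diff[OF fQ, of P'] by (simp add: Int_commute)
  have eq: "card P' = card Q'" using c1 c2 r1 r2 by linarith
  have "card Q \<le> card Q'" using fQ Q'(2) by (intro card_mono) auto
  then have "card P < card P'" using eq c by linarith
  then have "P \<noteq> P'" by auto
  then obtain q where q: "q \<in> P'" "q \<notin> P" using P'(2) by auto
  have "q \<in> Q" using q PL(2) by auto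
  moreover have "insert q P \<in> L" using m_down[OF m PL(1)] q P'(2) by auto
  ultimately show ?thesis using q(2) by auto
qed

lemma NUgen: assumes m: "matroid E L" and T: "is_base L T" and T': "is_base L T'"
  and sub: "T \<subseteq> I" "T' \<subseteq> I" and f: "finite (I - T)"
  shows "finite (I - T') \<and> card (I - T') = card (I - T)"
proof -
  have "T' - T \<subseteq> I - T" using sub by auto
  then have f1: "finite (T' - T)" using f finite_subset by auto
  have g1: "finite (T - T') \<and> card (T - T') \<le> card (T' - T)" using GL[OF m T' T f1] .
  have g2: "card (T' - T) \<le> card (T - T')" using GL[OF m T T'] g1 by auto
  define R where "R = I - T - T'"
  have fR: "finite R" unfolding R_def using f by auto
  have e1: "I - T = (T' - T) \<union> R" unfolding R_def using sub by auto
  have e2: "I - T' = (T - T') \<union> R" unfolding R_def using sub by auto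
  have d1: "(T' - T) \<inter> R = {}" "(T - T') \<inter> R = {}" unfolding R_def by auto
  have k1: "card (I - T) = card (T' - T) + card R" unfolding e1 using card_Un_disjoint[OF f1 fR d1(1)] .
  have k2: "card (I - T') = card (T - T') + card R" unfolding e2 using card_Un_disjoint[of "T - T'" R] g1 fR d1(2) by simp
  have "finite (I - T')" unfolding e2 using g1 fR by auto
  then show ?thesis using k1 k2 g1 g2 by linarith
qed


lemma U_intro: "S \<in> L1 \<Longrightarrow> T \<in> L2 \<Longrightarrow> I = S \<union> T \<Longrightarrow> I \<in> union_indep L1 L2"
  unfolding union_indep_def by blast
lemma U_elim: "I \<in> union_indep L1 L2 \<Longrightarrow> \<exists>S T. I = S \<union> T \<and> S \<in> L1 \<and> T \<in> L2"
  unfolding union_indep_def by blast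

lemma AUG:
  assumes mF: "matroid EF LF" and mN: "matroid EN LN" and bnd: "\<forall>S\<in>LF. finite S"
  and Sj: "Sj \<in> LF" and Tj: "is_base LN Tj" and dj: "Sj \<inter> Tj = {}"
  and I: "I \<in> union_indep LF LN"
  and nx: "\<forall>x\<in>(Sj \<union> Tj) - I. insert x I \<notin> union_indep LF LN"
  shows "\<exists>S1 T1. S1 \<in> LF \<and> is_base LN T1 \<and> S1 \<inter> T1 = {} \<and> I = S1 \<union> T1 \<and> card Sj \<le> card S1"
proof -
  define R where "R = (\<lambda>p. fst p \<in> LF \<and> snd p \<in> LN \<and> fst p \<inter> snd p = {} \<and> I = fst p \<union> snd p)"
  define mu where "mu = (\<lambda>p::'a set \<times> 'a set. card (fst p \<inter> Tj) + card (snd p \<inter> Sj))"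
  obtain S0 T0 where ST0: "I = S0 \<union> T0" "S0 \<in> LF" "T0 \<in> LN" using U_elim[OF I] by blast
  have "S0 - T0 \<in> LF" using m_down[OF mF ST0(2), of "S0 - T0"] by auto
  then have "R (S0 - T0, T0)" unfolding R_def using ST0 by auto
  then obtain p where p: "R p" "\<forall>q. R q \<longrightarrow> mu p \<le> mu q" using ex_has_least_nat[of R _ mu] by blast
  obtain S T where pST: "p = (S, T)" by (cases p)
  have R: "S \<in> LF" "T \<in> LN" "S \<inter> T = {}" "I = S \<union> T" using p(1) pST unfolding R_def by auto
  have min: "\<And>S' T'. R (S', T') \<Longrightarrow> mu (S,T) \<le> mu (S', T')" using p(2) pST by auto
  have fS: "finite S" using bnd R(1) by blast
  have fSj: "finite Sj" using bnd Sj by blast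
  have Tb: "is_base LN T"
  proof (rule ccontr)
    assume "\<not> is_base LN T"
    then obtain t where t: "t \<in> Tj" "t \<notin> T" "insert t T \<in> LN" using m_aug[OF mN Tj R(2)] by blast
    show False
    proof (cases "t \<in> S")
      case False
      then have "t \<in> (Sj \<union> Tj) - I" using t R(4) by auto
      moreover have "insert t I \<in> union_indep LF LN"
        by (rule U_intro[OF R(1) t(3)]) (use R(4) in auto)
      ultimately show False using nx by blast
    next
      case True
      have "S - {t} \<in> LF" using m_down[OF mF R(1), of "S - {t}"] by auto
      then have "R (S - {t}, insert t T)" unfolding R_def using R True t by auto
      then have le: "mu (S,T) \<le> mu (S - {t}, insert t T)" by (rule min)
      have "t \<notin> Sj" using t(1) dj by auto
      then have a: "insert t T \<inter> Sj = T \<inter> Sj" by auto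
      have b: "(S - {t}) \<inter> Tj = (S \<inter> Tj) - {t}" by auto
      have "t \<in> S \<inter> Tj" using True t(1) by auto
      then have "card ((S \<inter> Tj) - {t}) < card (S \<inter> Tj)" using fS by (intro card_Diff1_less) auto
      then show False using le a b unfolding mu_def by simp
    qed
  qed
  have cS: "card Sj \<le> card S"
  proof (rule ccontr)
    assume "\<not> card Sj \<le> card S"
    then have "card S < card Sj" by simp
    then obtain s where s: "s \<in> Sj" "s \<notin> S" "insert s S \<in> LF" using F_aug[OF mF bnd R(1) Sj] by blast
    show False
    proof (cases "s \<in> T")
      case False
      then have "s \<in> (Sj \<union> Tj) - I" using s R(4) by auto
      moreover have "insert s I \<in> union_indep LF LN"
        by (rule U_intro[OF s(3) R(2)]) (use R(4) in auto)
      ultimately show False using nx by blast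
    next
      case True
      have "T - {s} \<in> LN" using m_down[OF mN R(2), of "T - {s}"] by auto
      then have "R (insert s S, T - {s})" unfolding R_def using R True s by auto
      then have le: "mu (S,T) \<le> mu (insert s S, T - {s})" by (rule min)
      have "s \<notin> Tj" using s(1) dj by auto
      then have a: "insert s S \<inter> Tj = S \<inter> Tj" by auto
      have b: "(T - {s}) \<inter> Sj = (T \<inter> Sj) - {s}" by auto
      have "s \<in> T \<inter> Sj" using True s(1) by auto
      then have "card ((T \<inter> Sj) - {s}) < card (T \<inter> Sj)" using fSj by (intro card_Diff1_less) auto
      then show False using le a b unfolding mu_def by simp
    qed
  qed
  show ?thesis
    apply (rule exI[of _ S], rule exI[of _ T])
    using R Tb cS by simp
qed


lemma U_down: assumes I: "I \<in> union_indep L1 L2" and m1: "matroid E1 L1" and m2: "matroid E2 L2"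
  and J: "J \<subseteq> I" shows "J \<in> union_indep L1 L2"
proof -
  obtain S T where ST: "I = S \<union> T" "S \<in> L1" "T \<in> L2" using U_elim[OF I] by blast
  have "J \<inter> S \<in> L1" using m_down[OF m1 ST(2), of "J \<inter> S"] by auto
  moreover have "J \<inter> T \<in> L2" using m_down[OF m2 ST(3), of "J \<inter> T"] by auto
  moreover have "J = (J \<inter> S) \<union> (J \<inter> T)" using J ST(1) by auto
  ultimately show ?thesis by (rule U_intro)
qed

lemma MONO: assumes mN: "matroid EN LN" and B: "maxin LN X B" and B': "maxin LN X B'"
  and fS': "finite S'" and sub: "S \<union> B \<subseteq> S' \<union> B'" and x: "x \<in> (S' \<union> B') - (S \<union> B)"
  shows "card (S - B) < card (S' - B')"
proof -
  have sb: "B - B' \<subseteq> S' - B'" using sub by auto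
  then have f1: "finite (B - B')" using fS' finite_subset by auto
  have g: "finite (B' - B) \<and> card (B' - B) \<le> card (B - B')" using RL[OF mN B B' f1] .
  have s1: "insert x (S - B) \<subseteq> ((S' - B') - B) \<union> (B' - B)" using sub x by auto
  have fr: "finite (((S' - B') - B) \<union> (B' - B))" using fS' g by auto
  have fSB: "finite (S - B)" using s1 fr finite_subset by auto
  have "x \<notin> S - B" using x by auto
  then have c1: "card (insert x (S - B)) = Suc (card (S - B))" using fSB by simp
  have c2: "card (insert x (S - B)) \<le> card (((S' - B') - B) \<union> (B' - B))" using s1 fr by (intro card_mono)
  have c3: "card (((S' - B') - B) \<union> (B' - B)) \<le> card ((S' - B') - B) + card (B' - B)" by (rule card_Un_le)
  have d: "((S' - B') - B) \<inter> (B - B') = {}" by auto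
  have c4: "card (((S' - B') - B) \<union> (B - B')) = card ((S' - B') - B) + card (B - B')"
    using card_Un_disjoint[OF _ f1 d] fS' by auto
  have c5: "card (((S' - B') - B) \<union> (B - B')) \<le> card (S' - B')" using sb fS' by (intro card_mono) auto
  show ?thesis using c1 c2 c3 c4 c5 g by linarith
qed

lemma U_IM: assumes mF: "matroid EF LF" and mN: "matroid EN LN"
  and bnd: "\<forall>S\<in>LF. finite S \<and> card S \<le> r"
  and A: "A \<in> union_indep LF LN" and AX: "A \<subseteq> X" and XE: "X \<subseteq> EF \<union> EN"
  shows "\<exists>M. M \<in> union_indep LF LN \<and> A \<subseteq> M \<and> M \<subseteq> X \<and>
     (\<forall>S\<in>union_indep LF LN. M \<subseteq> S \<longrightarrow> S \<subseteq> X \<longrightarrow> S = M)"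
proof -
  define P where "P = (\<lambda>S B. S \<in> LF \<and> S \<subseteq> X \<and> maxin LN (X \<inter> EN) B \<and> A \<subseteq> S \<union> B)"
  define K where "K = {card (S - B) | S B. P S B}"
  obtain S0 T0 where ST0: "A = S0 \<union> T0" "S0 \<in> LF" "T0 \<in> LN" using U_elim[OF A] by blast
  have "T0 \<subseteq> X \<inter> EN" using ST0 AX m_sub[OF mN ST0(3)] by auto
  then obtain B0 where B0: "maxin LN (X \<inter> EN) B0" "T0 \<subseteq> B0" using m_max[OF mN ST0(3)] by blast
  have "P S0 B0" unfolding P_def using ST0 B0 AX by auto
  then have Kne: "card (S0 - B0) \<in> K" unfolding K_def by blast
  have Kb: "K \<subseteq> {..r}"
  proof
    fix k assume "k \<in> K"
    then obtain S B where "P S B" "k = card (S - B)" unfolding K_def by blast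
    then have "S \<in> LF" "k = card (S - B)" unfolding P_def by auto
    moreover have "card (S - B) \<le> card S" using bnd \<open>S \<in> LF\<close> by (intro card_mono) auto
    ultimately show "k \<in> {..r}" using bnd by fastforce
  qed
  have fK: "finite K" using Kb finite_subset by blast
  have "Max K \<in> K" using fK Kne by (intro Max_in) auto
  then have "\<exists>S B. Max K = card (S - B) \<and> P S B" unfolding K_def by (simp only: mem_Collect_eq)
  then obtain S B where SB: "P S B" "card (S - B) = Max K" by metis
  have maxK: "\<And>S' B'. P S' B' \<Longrightarrow> card (S' - B') \<le> card (S - B)"
  proof -
    fix S' B' assume "P S' B'"
    then have "card (S' - B') \<in> K" unfolding K_def by blast
    then show "card (S' - B') \<le> card (S - B)" using SB(2) fK by simp
  qed
  have SB': "S \<in> LF" "S \<subseteq> X" "maxin LN (X \<inter> EN) B" "A \<subseteq> S \<union> B" using SB(1) unfolding P_def by auto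
  have BL: "B \<in> LN" "B \<subseteq> X \<inter> EN" using SB'(3) unfolding maxin_def by auto
  have MU: "S \<union> B \<in> union_indep LF LN" using U_intro[OF SB'(1) BL(1)] by simp
  have MX: "S \<union> B \<subseteq> X" using SB'(2) BL(2) by auto
  have mx: "\<forall>S''\<in>union_indep LF LN. S \<union> B \<subseteq> S'' \<longrightarrow> S'' \<subseteq> X \<longrightarrow> S'' = S \<union> B"
  proof (intro ballI impI)
    fix S'' assume S'': "S'' \<in> union_indep LF LN" "S \<union> B \<subseteq> S''" "S'' \<subseteq> X"
    show "S'' = S \<union> B"
    proof (rule ccontr)
      assume ne: "S'' \<noteq> S \<union> B"
      then obtain x where x: "x \<in> S''" "x \<notin> S \<union> B" using S''(2) by blast
      obtain S1 T1 where ST1: "S'' = S1 \<union> T1" "S1 \<in> LF" "T1 \<in> LN" using U_elim[OF S''(1)] by blast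
      have "T1 \<subseteq> X \<inter> EN" using ST1 S''(3) m_sub[OF mN ST1(3)] by auto
      then obtain B1 where B1: "maxin LN (X \<inter> EN) B1" "T1 \<subseteq> B1" using m_max[OF mN ST1(3)] by blast
      have sub: "S \<union> B \<subseteq> S1 \<union> B1" using S''(2) ST1(1) B1(2) by auto
      have "P S1 B1" unfolding P_def using ST1 B1 S''(3) SB'(4) sub by auto
      then have le: "card (S1 - B1) \<le> card (S - B)" by (rule maxK)
      have "x \<in> (S1 \<union> B1) - (S \<union> B)" using x ST1(1) B1(2) by auto
      then have "card (S - B) < card (S1 - B1)"
        using MONO[OF mN SB'(3) B1(1) _ sub] bnd ST1(2) by blast
      then show False using le by linarith
    qed
  qed
  show ?thesis
    apply (rule exI[of _ "S \<union> B"])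
    using MU SB'(4) MX mx by blast
qed


lemma U_I3: assumes mF: "matroid EF LF" and mN: "matroid EN LN" and bnd: "\<forall>S\<in>LF. finite S"
  and BU: "is_base (union_indep LF LN) BU" and A: "A \<in> union_indep LF LN"
  and nA: "\<not> is_base (union_indep LF LN) A"
  shows "\<exists>b\<in>BU - A. insert b A \<in> union_indep LF LN"
proof (rule ccontr)
  assume H: "\<not> (\<exists>b\<in>BU - A. insert b A \<in> union_indep LF LN)"
  have BUU: "BU \<in> union_indep LF LN" using baseL[OF BU] .
  obtain S T where ST: "BU = S \<union> T" "S \<in> LF" "T \<in> LN" using U_elim[OF BUU] by blast
  obtain N0 where N0: "is_base LN N0" using base_exists[OF mN] by blast
  obtain T2 where T2: "is_base LN T2" "T \<subseteq> T2" using L_ext[OF mN ST(3) N0] by blast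
  have "S \<union> T2 \<in> union_indep LF LN" using U_intro[OF ST(2) baseL[OF T2(1)]] by simp
  moreover have "BU \<subseteq> S \<union> T2" using ST(1) T2(2) by auto
  ultimately have eq2: "S \<union> T2 = BU" by (rule baseD[OF BU])
  define S2 where "S2 = S - T2"
  have S2: "S2 \<in> LF" "S2 \<inter> T2 = {}" "S2 \<union> T2 = BU" unfolding S2_def
    using m_down[OF mF ST(2), of "S - T2"] eq2 by auto
  have nx1: "\<forall>x\<in>(S2 \<union> T2) - A. insert x A \<notin> union_indep LF LN" using H S2(3) by auto
  obtain S1 T1 where A1: "S1 \<in> LF" "is_base LN T1" "S1 \<inter> T1 = {}" "A = S1 \<union> T1" "card S2 \<le> card S1"
    using AUG[OF mF mN bnd S2(1) T2(1) S2(2) A nx1] by blast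
  have "\<not> (\<forall>S\<in>union_indep LF LN. A \<subseteq> S \<longrightarrow> S = A)" using nA A unfolding is_base_def by simp
  then obtain Z where Z: "Z \<in> union_indep LF LN" "A \<subseteq> Z" "Z \<noteq> A" by auto
  then obtain z where z: "z \<in> Z" "z \<notin> A" by blast
  have zA: "insert z A \<in> union_indep LF LN" using U_down[OF Z(1) mF mN] Z(2) z(1) by auto
  obtain S' T' where ST': "insert z A = S' \<union> T'" "S' \<in> LF" "T' \<in> LN" using U_elim[OF zA] by blast
  obtain T3 where T3: "is_base LN T3" "T' \<subseteq> T3" using L_ext[OF mN ST'(3) N0] by blast
  define I3 where "I3 = S' \<union> T3"
  define S3 where "S3 = S' - T3"
  have I3U: "I3 \<in> union_indep LF LN" unfolding I3_def using U_intro[OF ST'(2) baseL[OF T3(1)]] by simp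
  have S3: "S3 \<in> LF" "S3 \<inter> T3 = {}" "I3 - T3 = S3" "S3 \<union> T3 = I3" unfolding S3_def I3_def
    using m_down[OF mF ST'(2), of "S' - T3"] by auto
  have fS3: "finite S3" using bnd S3(1) by blast
  have fS1: "finite S1" using bnd A1(1) by blast
  have subI3: "insert z A \<subseteq> I3" unfolding I3_def using ST'(1) T3(2) by auto
  have nu1: "finite (I3 - T1) \<and> card (I3 - T1) = card (I3 - T3)"
    using NUgen[OF mN T3(1) A1(2), of I3] subI3 A1(4) S3(3) fS3 unfolding I3_def by auto
  have zS1: "insert z S1 \<subseteq> I3 - T1" using subI3 z(2) A1(3) A1(4) by auto
  have "z \<notin> S1" using z(2) A1(4) by auto
  then have "card (insert z S1) = Suc (card S1)" using fS1 by simp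
  moreover have "card (insert z S1) \<le> card (I3 - T1)" using zS1 nu1 by (intro card_mono) auto
  ultimately have c1: "Suc (card S1) \<le> card S3" using nu1 S3(3) by simp
  have nx2: "\<forall>x\<in>(S3 \<union> T3) - BU. insert x BU \<notin> union_indep LF LN"
  proof (intro ballI notI)
    fix x assume x: "x \<in> (S3 \<union> T3) - BU" and "insert x BU \<in> union_indep LF LN"
    then have "insert x BU = BU" using baseD[OF BU] by auto
    then show False using x by blast
  qed
  obtain S4 T4 where A4: "S4 \<in> LF" "is_base LN T4" "S4 \<inter> T4 = {}" "BU = S4 \<union> T4" "card S3 \<le> card S4"
    using AUG[OF mF mN bnd S3(1) T3(1) S3(2) BUU nx2] by blast
  have fS2: "finite S2" using bnd S2(1) by blast
  have e2: "BU - T2 = S2" using S2 by auto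
  have e4: "BU - T4 = S4" using A4(3) A4(4) by auto
  have nu2: "finite (BU - T4) \<and> card (BU - T4) = card (BU - T2)"
    using NUgen[OF mN T2(1) A4(2), of BU] S2(3) A4(4) e2 fS2 by auto
  have "card S4 = card S2" using nu2 e2 e4 by simp
  then show False using c1 A1(5) A4(5) by linarith
qed

theorem theorem3p5p1:
  fixes EF EN :: "'a set" and LF LN :: "'a set set"
  assumes "matroid EF LF" and "finite_rank LF" and "matroid EN LN"
  shows "matroid (EF \<union> EN) (union_indep LF LN)"
proof -
  note mF = assms(1) and mN = assms(3)
  obtain B0 where B0: "is_base LF B0" "finite B0" using assms(2) unfolding finite_rank_def by blast
  have bnd: "\<forall>S\<in>LF. finite S \<and> card S \<le> card B0" using rank_bound[OF mF B0] by blast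
  have bnd': "\<forall>S\<in>LF. finite S" using bnd by blast
  show ?thesis unfolding matroid_def
  proof (intro conjI)
    show "\<forall>S\<in>union_indep LF LN. S \<subseteq> EF \<union> EN"
    proof
      fix S assume hS: "S \<in> union_indep LF LN"
      obtain S1 T1 where "S = S1 \<union> T1" "S1 \<in> LF" "T1 \<in> LN" using U_elim[OF hS] by blast
      then show "S \<subseteq> EF \<union> EN" using m_sub[OF mF \<open>S1 \<in> LF\<close>] m_sub[OF mN \<open>T1 \<in> LN\<close>] by auto
    qed
    show "{} \<in> union_indep LF LN" using U_intro[OF m_empty[OF mF] m_empty[OF mN]] by simp
    show "\<forall>A B. B \<in> union_indep LF LN \<longrightarrow> A \<subseteq> B \<longrightarrow> A \<in> union_indep LF LN"
      by (intro allI impI) (erule U_down[OF _ mF mN], assumption)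
    show "\<forall>A B. is_base (union_indep LF LN) B \<longrightarrow> A \<in> union_indep LF LN \<longrightarrow>
        \<not> is_base (union_indep LF LN) A \<longrightarrow> (\<exists>b\<in>B - A. insert b A \<in> union_indep LF LN)"
      by (intro allI impI) (rule U_I3[OF mF mN bnd'], assumption+)
    show "\<forall>A X. A \<in> union_indep LF LN \<longrightarrow> A \<subseteq> X \<longrightarrow> X \<subseteq> EF \<union> EN \<longrightarrow>
        (\<exists>M. M \<in> union_indep LF LN \<and> A \<subseteq> M \<and> M \<subseteq> X \<and>
              (\<forall>S\<in>union_indep LF LN. M \<subseteq> S \<longrightarrow> S \<subseteq> X \<longrightarrow> S = M))"
      by (intro allI impI) (rule U_IM[OF mF mN bnd], assumption+)
  qed
qed

end
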